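(* For every positive integer $k$: (i) $\mathrm{Cl}_k(\pi/3)$ lies in the $\mathbb{Q}$-linear span of $S^{o}_{k,1}$; (ii) $\mathrm{Gl}_k(\pi/3)$ lies in the $\mathbb{Q}$-linear span of $S^{e}_{k,1}$ (which equals $S^e_{k,0}=\{\pi^k\}$).
   Context: $\mathrm{Li}_k(z)=\sum_{m\ge1}z^m/m^k$ (for $k=1$, $\mathrm{Li}_1(z)=-\log(1-z)$). $\mathrm{Cl}_k(\sigma)=\mathrm{Im}\,\mathrm{Li}_k(e^{i\sigma})$ if $k$ is even and $\mathrm{Re}\,\mathrm{Li}_k(e^{i\sigma})$ if $k$ is odd; $\mathrm{Gl}_k(\sigma)=\mathrm{Re}\,\mathrm{Li}_k(e^{i\sigma})$ if $k$ even and $\mathrm{Im}\,\mathrm{Li}_k(e^{i\sigma})$ if $k$ odd. $A(\theta)=\log|2\sin(\theta/2)|$; for $k_u\ge2$, $\mathrm{SLs}(k_1,\dots,k_n)=\int_0^{\pi/3}\int_0^{\theta_n}\cdots\int_0^{\theta_2}\prod_{u=1}^n(\theta_u-\pi/3)^{k_u-2}A(\theta_u)\,d\theta_1\cdots d\theta_n$, $\mathrm{SLs}(\emptyset)=1$. For $k,d\ge0$: $S^o_{k,d}=\{\pi^m\mathrm{SLs}(k_1,\dots,k_n): m+k_1+\dots+k_n=k,\ 0\le n\le d,\ n\text{ odd},\ m\ge0,\ k_i\ge2\}$ and $S^e_{k,d}$ is defined the same way with $n$ even. *)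

theory Defs
  imports "HOL-Analysis.Analysis"
begin

definition polylog :: "nat \<Rightarrow> complex \<Rightarrow> complex" where
  "polylog k z = (if k = 1 then - Ln (1 - z)
                  else (\<Sum>m. z ^ (Suc m) / (of_nat (Suc m)) ^ k))"

definition Cl :: "nat \<Rightarrow> real \<Rightarrow> real" where
  "Cl k \<sigma> = (if even k then Im (polylog k (cis \<sigma>)) else Re (polylog k (cis \<sigma>)))"

definition Gl :: "nat \<Rightarrow> real \<Rightarrow> real" where
  "Gl k \<sigma> = (if even k then Re (polylog k (cis \<sigma>)) else Im (polylog k (cis \<sigma>)))"

definition A_fun :: "real \<Rightarrow> real" where
  "A_fun \<theta> = ln \<bar>2 * sin (\<theta> / 2)\<bar>"

text \<open>Iterated integral helper: the list is given outermost-first, i.e.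
  SLs_aux [k_n, ..., k_1] t =
  int_0^t g_{k_n}(th_n) int_0^{th_n} ... int_0^{th_2} g_{k_1}(th_1) dth_1 ... dth_n,
  with g_k(th) = (th - pi/3)^(k-2) A(th).\<close>
fun SLs_aux :: "nat list \<Rightarrow> real \<Rightarrow> real" where
  "SLs_aux [] t = 1"
| "SLs_aux (k # ks) t =
     integral {0..t} (\<lambda>\<theta>. (\<theta> - pi/3) ^ (k - 2) * A_fun \<theta> * SLs_aux ks \<theta>)"

definition SLs :: "nat list \<Rightarrow> real" where
  "SLs ks = SLs_aux (rev ks) (pi / 3)"

definition S_odd :: "nat \<Rightarrow> nat \<Rightarrow> real set" where
  "S_odd k d = {pi ^ m * SLs ks | m ks. m + sum_list ks = k \<and> length ks \<le> d
                  \<and> odd (length ks) \<and> (\<forall>i\<in>set ks. 2 \<le> i)}"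

definition S_even :: "nat \<Rightarrow> nat \<Rightarrow> real set" where
  "S_even k d = {pi ^ m * SLs ks | m ks. m + sum_list ks = k \<and> length ks \<le> d
                  \<and> even (length ks) \<and> (\<forall>i\<in>set ks. 2 \<le> i)}"

definition in_rat_span :: "real \<Rightarrow> real set \<Rightarrow> bool" where
  "in_rat_span x S \<longleftrightarrow> (\<exists>F c. finite F \<and> F \<subseteq> S \<and> x = (\<Sum>s\<in>F. of_rat (c s) * s))"

end

theory Submission
  imports Defs "HOL-Real_Asymp.Real_Asymp"
begin


definition li :: "nat \<Rightarrow> complex \<Rightarrow> complex" where
  "li k z = (\<Sum>m. z ^ Suc m / of_nat (Suc m) ^ k)"

definition cf :: "nat \<Rightarrow> nat \<Rightarrow> complex" where
  "cf k n = (if n = 0 then 0 else 1 / of_nat n ^ k)"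

lemma li_summable_disc:
  fixes z :: complex
  assumes "norm z < 1"
  shows "summable (\<lambda>m. z ^ Suc m / of_nat (Suc m) ^ k)"
proof (rule summable_comparison_test'[where g = "\<lambda>m. norm z ^ Suc m" and N=0])
  fix n :: nat
  show "norm (z ^ Suc n / of_nat (Suc n) ^ k) \<le> norm z ^ Suc n"
  proof -
    have "1 \<le> real (Suc n) ^ k" by simp
    then have "norm z ^ Suc n / real (Suc n) ^ k \<le> norm z ^ Suc n / 1"
      by (intro divide_left_mono) auto
    then have "norm z ^ Suc n / real (Suc n) ^ k \<le> norm z ^ Suc n" by simp
    then show "norm (z ^ Suc n / of_nat (Suc n) ^ k) \<le> norm z ^ Suc n"
      by (simp add: norm_divide norm_power norm_mult del: of_nat_Suc power_Suc)
  qed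
next
  show "summable (\<lambda>n. norm z ^ Suc n)"
    using assms by (simp add: summable_geometric)
qed

lemma li_summable_closed:
  fixes z :: complex
  assumes "norm z \<le> 1" "2 \<le> k"
  shows "summable (\<lambda>m. z ^ Suc m / of_nat (Suc m) ^ k)"
proof (rule summable_comparison_test'[where g = "\<lambda>m. inverse (real (Suc m) ^ 2)" and N=0])
  fix n :: nat
  show "norm (z ^ Suc n / of_nat (Suc n) ^ k) \<le> inverse (real (Suc n) ^ 2)"
  proof -
    have a: "norm z ^ Suc n \<le> 1" by (rule power_le_one) (use assms in auto)
    have b: "real (Suc n) ^ 2 \<le> real (Suc n) ^ k" using assms by (intro power_increasing) auto
    have "norm z ^ Suc n / real (Suc n) ^ k \<le> 1 / real (Suc n) ^ k"
      using a by (simp add: divide_right_mono)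
    also have "\<dots> \<le> 1 / real (Suc n) ^ 2" using b by (intro divide_left_mono) auto
    finally show "norm (z ^ Suc n / of_nat (Suc n) ^ k) \<le> inverse (real (Suc n) ^ 2)"
      by (simp add: norm_divide norm_power inverse_eq_divide del: of_nat_Suc power_Suc)
  qed
next
  show "summable (\<lambda>n. inverse (real (Suc n) ^ 2))"
    using inverse_power_summable[of 2, where 'a=real] by (subst summable_Suc_iff) simp
qed

lemma li_cf:
  assumes "summable (\<lambda>m. z ^ Suc m / of_nat (Suc m) ^ k)"
  shows "(\<lambda>n. cf k n * z ^ n) sums li k z"
proof -
  have "(\<lambda>m. z ^ Suc m / of_nat (Suc m) ^ k) sums li k z"
    using assms unfolding li_def by (rule summable_sums)
  then have "(\<lambda>n. cf k (Suc n) * z ^ Suc n) sums li k z"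
    by (simp add: cf_def)
  then show ?thesis by (subst (asm) sums_Suc_iff) (simp add: cf_def)
qed

lemma diffs_cf: "1 \<le> k \<Longrightarrow> diffs (cf k) n = 1 / of_nat (Suc n) ^ (k - 1)"
proof -
  assume k: "1 \<le> k"
  then obtain j where j: "k = Suc j" by (cases k) auto
  have nz: "(of_nat (Suc n) :: complex) \<noteq> 0" by (simp del: of_nat_Suc)
  have "diffs (cf k) n = of_nat (Suc n) * (1 / of_nat (Suc n) ^ k)"
    unfolding diffs_def cf_def by simp
  also have "\<dots> = 1 / of_nat (Suc n) ^ (k - 1)"
    using nz unfolding j by (simp del: of_nat_Suc)
  finally show ?thesis .
qed

lemma li_deriv:
  assumes "norm z < 1" "1 \<le> k"
  shows "(li k has_field_derivative (\<Sum>n. z ^ n / of_nat (Suc n) ^ (k - 1))) (at z)"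
proof -
  define K :: complex where "K = of_real ((1 + norm z) / 2)"
  have nK: "norm K = (1 + norm z) / 2" unfolding K_def
    by (simp only: norm_of_real) (simp add: abs_of_nonneg add_nonneg_nonneg)
  have K1: "norm K < 1" using assms nK by simp
  have zK: "norm z < norm K" using assms nK by simp
  have sm: "summable (\<lambda>n. cf k n * K ^ n)"
    using li_cf[OF li_summable_disc[OF K1]] by (simp add: sums_iff)
  have eq: "\<And>w. norm w < 1 \<Longrightarrow> li k w = (\<Sum>n. cf k n * w ^ n)"
    using li_cf[OF li_summable_disc] by (simp add: sums_iff)
  have "DERIV (\<lambda>x. \<Sum>n. cf k n * x^n) z :> (\<Sum>n. diffs (cf k) n * z^n)"
    by (rule termdiffs_strong[OF sm zK])
  moreover have "eventually (\<lambda>w. li k w = (\<Sum>n. cf k n * w ^ n)) (nhds z)"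
    using eventually_nhds_in_open[of "ball 0 1" z] assms
    by (auto elim!: eventually_mono intro!: eq simp: dist_norm)
  ultimately have "DERIV (li k) z :> (\<Sum>n. diffs (cf k) n * z^n)"
    using DERIV_cong_ev[OF refl _ refl] by (metis (no_types, lifting) eventually_mono)
  then show ?thesis using diffs_cf[OF assms(2)] by simp
qed



lemma li_shift_summable:
  fixes z :: complex
  assumes "norm z < 1"
  shows "summable (\<lambda>m. z ^ m / of_nat (Suc m) ^ j)"
proof (rule summable_comparison_test'[where g = "\<lambda>m. norm z ^ m" and N=0])
  fix n :: nat
  have "1 \<le> real (Suc n) ^ j" by simp
  then have "norm z ^ n / real (Suc n) ^ j \<le> norm z ^ n / 1"
    by (intro divide_left_mono) auto
  then show "norm (z ^ n / of_nat (Suc n) ^ j) \<le> norm z ^ n"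
    by (simp add: norm_divide norm_power del: of_nat_Suc)
next
  show "summable (\<lambda>n. norm z ^ n)"
    using assms by (simp add: summable_geometric)
qed


lemma li_mult_eq:
  assumes "norm z < 1"
  shows "z * (\<Sum>n. z ^ n / of_nat (Suc n) ^ i) = li i z"
proof -
  have "z * (\<Sum>n. z ^ n / of_nat (Suc n) ^ i) = (\<Sum>n. z * (z ^ n / of_nat (Suc n) ^ i))"
    by (rule suminf_mult[symmetric, OF li_shift_summable[OF assms(1)]])
  also have "\<dots> = li i z" unfolding li_def by (simp add: mult.assoc)
  finally show ?thesis .
qed

lemma li_circle_deriv:
  assumes "0 \<le> r" "r < 1" "1 \<le> j"
  shows "((\<lambda>t. li j (of_real r * cis t)) has_vector_derivative (\<i> * li (j - 1) (of_real r * cis t))) (at t within S)"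
proof -
  define G where "G = (\<lambda>w. li j (of_real r * exp (\<i> * w)))"
  define z where "z = of_real r * exp (\<i> * of_real t)"
  have nz: "norm z < 1" using assms unfolding z_def by (simp add: norm_mult)
  have d1: "DERIV (\<lambda>w. of_real r * exp (\<i> * w)) (of_real t) :> of_real r * (exp (\<i> * of_real t) * \<i>)"
    by (auto intro!: derivative_eq_intros)
  have "DERIV G (of_real t) :> (\<Sum>n. z ^ n / of_nat (Suc n) ^ (j - 1)) * (of_real r * (exp (\<i> * of_real t) * \<i>))"
    unfolding G_def z_def using DERIV_chain2[OF li_deriv[OF nz[unfolded z_def] assms(3)] d1] .
  also have "(\<Sum>n. z ^ n / of_nat (Suc n) ^ (j - 1)) * (of_real r * (exp (\<i> * of_real t) * \<i>))
      = \<i> * (z * (\<Sum>n. z ^ n / of_nat (Suc n) ^ (j - 1)))"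
    unfolding z_def by (simp add: algebra_simps)
  also have "\<dots> = \<i> * li (j - 1) (of_real r * cis t)"
    using li_mult_eq[OF nz] unfolding z_def by (simp add: cis_conv_exp)
  finally have "DERIV G (of_real t) :> \<i> * li (j - 1) (of_real r * cis t)" .
  from has_vector_derivative_real_field[OF this]
  show ?thesis unfolding G_def by (simp add: cis_conv_exp)
qed

lemma li_taylor_r:
  assumes "0 \<le> r" "r < 1" "2 \<le> k" "0 \<le> b"
  shows "((\<lambda>t. ((b - t) ^ (k - 2) / fact (k - 2)) *\<^sub>R (\<i> ^ (k - 1) * li 1 (of_real r * cis t)))
          has_integral li k (of_real r * cis b) - (\<Sum>i<k-1. (b ^ i / fact i) *\<^sub>R (\<i> ^ i * li (k - i) (of_real r)))) {0..b}"
proof -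
  define Df where "Df = (\<lambda>m t. \<i> ^ m * li (k - m) (of_real r * cis t))"
  have "((\<lambda>t. ((b - t) ^ (k - 1 - 1) / fact (k - 1 - 1)) *\<^sub>R Df (k - 1) t)
        has_integral Df 0 b - (\<Sum>i<k-1. ((b - 0) ^ i / fact i) *\<^sub>R Df i 0)) {0..b}"
  proof (rule Taylor_has_integral)
    show "0 < k - 1" using assms by simp
    show "Df 0 = Df 0" ..
    show "0 \<le> b" by fact
    fix m t assume m: "m < k - 1"
    have "((\<lambda>t. li (k - m) (of_real r * cis t)) has_vector_derivative (\<i> * li (k - m - 1) (of_real r * cis t))) (at t within {0..b})"
      by (rule li_circle_deriv) (use assms m in auto)
    then have "((\<lambda>t. \<i> ^ m * li (k - m) (of_real r * cis t)) has_vector_derivative \<i> ^ m * (\<i> * li (k - m - 1) (of_real r * cis t))) (at t within {0..b})"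
      by (rule has_vector_derivative_mult_right)
    moreover have "k - m - 1 = k - Suc m" by simp
    ultimately show "(Df m has_vector_derivative Df (Suc m) t) (at t within {0..b})"
      unfolding Df_def by (simp add: ac_simps)
  qed
  moreover have "k - 1 - 1 = k - 2" by simp
  moreover have "k - (k - 1) = 1" using assms by simp
  ultimately show ?thesis unfolding Df_def by simp
qed



lemma li_cont:
  assumes "2 \<le> k"
  shows "continuous_on (cball 0 1) (li k)"
proof -
  have ul: "uniform_limit (cball (0::complex) 1) (\<lambda>n x. \<Sum>i<n. x ^ Suc i / of_nat (Suc i) ^ k)
        (\<lambda>x. suminf (\<lambda>i. x ^ Suc i / of_nat (Suc i) ^ k)) sequentially"
  proof (rule Weierstrass_m_test[where M = "\<lambda>i. inverse (real (Suc i) ^ 2)" and f = "\<lambda>i x. x ^ Suc i / of_nat (Suc i) ^ k"])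
    fix n :: nat and x :: complex assume x: "x \<in> cball 0 1"
    have a: "norm x ^ Suc n \<le> 1" by (rule power_le_one) (use x in auto)
    have b: "real (Suc n) ^ 2 \<le> real (Suc n) ^ k" using assms by (intro power_increasing) auto
    have "norm x ^ Suc n / real (Suc n) ^ k \<le> 1 / real (Suc n) ^ k"
      using a by (simp add: divide_right_mono)
    also have "\<dots> \<le> 1 / real (Suc n) ^ 2" using b by (intro divide_left_mono) auto
    finally show "norm (x ^ Suc n / of_nat (Suc n) ^ k) \<le> inverse (real (Suc n) ^ 2)"
      by (simp add: norm_divide norm_power inverse_eq_divide del: of_nat_Suc power_Suc)
  next
    show "summable (\<lambda>n. inverse (real (Suc n) ^ 2))"
      using inverse_power_summable[of 2, where 'a=real] by (subst summable_Suc_iff) simp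
  qed
  have "continuous_on (cball (0::complex) 1) (\<lambda>x. suminf (\<lambda>i. x ^ Suc i / of_nat (Suc i) ^ k))"
  proof (rule uniform_limit_theorem[OF _ ul])
    show "\<forall>\<^sub>F n in sequentially. continuous_on (cball (0::complex) 1) (\<lambda>x. \<Sum>i<n. x ^ Suc i / of_nat (Suc i) ^ k)"
    proof (intro always_eventually allI)
      fix n
      show "continuous_on (cball (0::complex) 1) (\<lambda>x. \<Sum>i<n. x ^ Suc i / of_nat (Suc i) ^ k)"
        apply (rule continuous_on_sum)
        apply (rule continuous_intros)+
        apply (auto simp del: of_nat_Suc)
        done
    qed
  qed simp
  then show ?thesis unfolding li_def[abs_def] .
qed

definition rr :: "nat \<Rightarrow> real" where "rr n = 1 - 1 / (real n + 2)"

lemma rr_bounds: "1/2 \<le> rr n" "rr n < 1"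
  unfolding rr_def by (auto simp: field_simps)

lemma rr_lim: "rr \<longlonglongrightarrow> 1"
proof -
  have "(\<lambda>n. 1 / (real n + 2)) \<longlonglongrightarrow> 0"
    by real_asymp
  then have "(\<lambda>n. 1 - 1 / (real n + 2)) \<longlonglongrightarrow> 1 - 0" by (intro tendsto_intros)
  then show ?thesis unfolding rr_def[abs_def] by simp
qed

lemma li_lim:
  assumes "2 \<le> k" "norm w \<le> 1"
  shows "(\<lambda>n. li k (of_real (rr n) * w)) \<longlonglongrightarrow> li k w"
proof -
  have "(\<lambda>n. of_real (rr n) * w) \<longlonglongrightarrow> of_real 1 * w"
    by (intro tendsto_intros rr_lim)
  then have t: "(\<lambda>n. of_real (rr n) * w) \<longlonglongrightarrow> w" by simp
  show ?thesis
  proof (rule continuous_on_tendsto_compose[OF li_cont[OF assms(1)] t])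
    show "w \<in> cball 0 1" using assms by simp
    show "\<forall>\<^sub>F n in sequentially. of_real (rr n) * w \<in> cball 0 1"
    proof (intro always_eventually allI)
      fix n
      have "\<bar>rr n\<bar> \<le> 1" using rr_bounds[of n] by simp
      then have "\<bar>rr n\<bar> * norm w \<le> 1" using assms by (intro mult_le_one) auto
      then show "of_real (rr n) * w \<in> cball 0 1" by (simp add: norm_mult)
    qed
  qed
qed

lemma li1_Ln:
  assumes "norm z < 1"
  shows "li 1 z = - Ln (1 - z)"
proof -
  have "norm (-z) < 1" using assms by simp
  from Ln_series'[OF this] have "(\<lambda>n. - (z ^ n) / of_nat n) sums Ln (1 - z)"
    by simp
  then have "(\<lambda>n. - (z ^ Suc n) / of_nat (Suc n)) sums Ln (1 - z)"
    by (subst sums_Suc_iff) simp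
  from sums_minus[OF this] have "(\<lambda>n. z ^ Suc n / of_nat (Suc n) ^ 1) sums (- Ln (1 - z))"
    by simp
  then show ?thesis unfolding li_def by (simp add: sums_iff)
qed



lemma sin_lower:
  assumes "0 \<le> t" "t \<le> pi / 3"
  shows "t / 2 \<le> sin t"
proof (cases "t = 0")
  case True then show ?thesis by simp
next
  case False
  then have t0: "0 < t" using assms by simp
  from MVT2[OF t0, of sin cos] obtain z where z: "0 < z" "z < t" "sin t - sin 0 = (t - 0) * cos z"
    by (auto intro: DERIV_sin)
  have "cos (pi / 3) \<le> cos z"
    by (rule cos_monotone_0_pi_le) (use z assms in auto)
  then have "1/2 \<le> cos z" by (simp add: cos_60)
  then have "t * (1/2) \<le> t * cos z" using t0 by (intro mult_left_mono) auto
  then show ?thesis using z by simp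
qed

lemma Ln_bound:
  assumes r: "1/2 \<le> r" "r \<le> 1" and t: "0 < t" "t \<le> pi / 3"
  shows "norm (Ln (1 - of_real r * cis t)) \<le> 6 + 2 * t powr (-1/2)"
proof -
  define u where "u = 1 - of_real r * cis t"
  have Imu: "Im u = - r * sin t" unfolding u_def by simp
  have st: "t / 2 \<le> sin t" using sin_lower t by simp
  have "t / 4 \<le> r * sin t"
  proof -
    have "(1/2) * (t/2) \<le> r * sin t" using r st t by (intro mult_mono) auto
    then show ?thesis by simp
  qed
  also have "r * sin t \<le> norm u" using abs_Im_le_cmod[of u] Imu r st t by simp
  finally have lo: "t / 4 \<le> norm u" .
  have u0: "u \<noteq> 0" using lo t by auto
  have "norm u \<le> 1 + norm (of_real r * cis t)" unfolding u_def using norm_triangle_ineq4[of 1 "of_real r * cis t"] by simp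
  then have hi: "norm u \<le> 2" using r by (simp add: norm_mult)
  have "ln (norm u) \<le> ln 2" using hi u0 by simp
  also have "ln 2 \<le> (1::real)" using ln_2_less_1 by simp
  finally have up: "ln (norm u) \<le> 1" .
  have "ln (t / 4) \<le> ln (norm u)" using lo t by (intro ln_mono) auto
  moreover have "ln (t / 4) = ln t - ln 4" using t by (simp add: ln_div)
  moreover have "ln (4::real) \<le> 2"
  proof -
    have "ln (4::real) = 2 * ln 2" by (metis ln_realpow mult_2 numeral_Bit0 one_add_one power2_eq_square zero_less_numeral ln_mult)
    then show ?thesis using ln_2_less_1 by simp
  qed
  moreover have "- ln t \<le> 2 * t powr (-1/2)"
  proof -
    have "ln (t powr (-1/2)) \<le> t powr (-1/2) - 1" using t by (intro ln_le_minus_one) auto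
    moreover have "ln (t powr (-1/2)) = (-1/2) * ln t" using t by (simp add: ln_powr)
    ultimately show ?thesis by simp
  qed
  ultimately have low: "- ln (norm u) \<le> 2 + 2 * t powr (-1/2)" by linarith
  have "norm (Ln u) \<le> \<bar>Re (Ln u)\<bar> + \<bar>Im (Ln u)\<bar>" by (rule cmod_le)
  also have "\<bar>Re (Ln u)\<bar> = \<bar>ln (norm u)\<bar>" using u0 by simp
  also have "\<bar>Im (Ln u)\<bar> \<le> pi" using mpi_less_Im_Ln[of u] Im_Ln_le_pi[of u] u0 by auto
  finally have "norm (Ln u) \<le> \<bar>ln (norm u)\<bar> + pi" by simp
  moreover have "\<bar>ln (norm u)\<bar> \<le> 2 + 2 * t powr (-1/2)"
    using up low t by (simp add: abs_le_iff) (smt (verit) powr_ge_zero)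
  ultimately show ?thesis using pi_less_4 unfolding u_def by linarith
qed



lemma li_integral_formula:
  assumes k: "2 \<le> k"
  defines "b \<equiv> pi / 3"
  defines "g \<equiv> \<lambda>t. if t = 0 then 0 else ((b - t) ^ (k - 2) / fact (k - 2)) *\<^sub>R (\<i> ^ (k - 1) * (- Ln (1 - cis t)))"
  shows "g integrable_on {0..b}"
    "integral {0..b} g = li k (cis b) - (\<Sum>i<k-1. (b ^ i / fact i) *\<^sub>R (\<i> ^ i * li (k - i) 1))"
proof -
  have b0: "0 \<le> b" unfolding b_def by simp
  define f0 where "f0 = (\<lambda>n t. ((b - t) ^ (k - 2) / fact (k - 2)) *\<^sub>R (\<i> ^ (k - 1) * li 1 (of_real (rr n) * cis t)))"
  define f where "f = (\<lambda>n t. if t = 0 then 0 else f0 n t)"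
  define h where "h = (\<lambda>t::real. b ^ (k - 2) * (6 + 2 * t powr (-1/2)))"
  define V where "V = (\<lambda>n. li k (of_real (rr n) * cis b) - (\<Sum>i<k-1. (b ^ i / fact i) *\<^sub>R (\<i> ^ i * li (k - i) (of_real (rr n)))))"
  have hi0: "(f0 n has_integral V n) {0..b}" for n
  proof -
    have "0 \<le> rr n" using rr_bounds(1)[of n] by linarith
    from li_taylor_r[OF this rr_bounds(2) k b0] show ?thesis unfolding f0_def V_def .
  qed
  have fi: "\<And>n. (f n has_integral V n) {0..b}"
  proof -
    fix n
    show "(f n has_integral V n) {0..b}"
      by (rule has_integral_spike[OF negligible_sing _ hi0[of n], of 0]) (auto simp: f_def)
  qed
  have hint: "h integrable_on {0..b}"
  proof -
    have "(\<lambda>t::real. t powr (-1/2)) integrable_on {0..b}"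
      by (rule integrable_on_powr_from_0) (use b0 in auto)
    then have "(\<lambda>t::real. 6 + 2 * t powr (-1/2)) integrable_on {0..b}"
      by (intro integrable_add integrable_cmul integrable_const_ivl) (auto intro: integrable_cmul)
    from integrable_cmul[OF this, of "b ^ (k - 2)"] show ?thesis unfolding h_def by simp
  qed
  have bound: "norm (f n t) \<le> h t" if t: "t \<in> {0..b}" for n t
  proof (cases "t = 0")
    case True then show ?thesis unfolding f_def h_def using b0 by simp
  next
    case False
    then have t0: "0 < t" "t \<le> pi / 3" using t b_def by auto
    have "\<bar>rr n\<bar> < 1" using rr_bounds[of n] by linarith
    then have nz: "norm (of_real (rr n) * cis t) < 1" by (simp add: norm_mult)
    have L: "norm (li 1 (of_real (rr n) * cis t)) \<le> 6 + 2 * t powr (-1/2)"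
      using Ln_bound[OF rr_bounds(1) less_imp_le[OF rr_bounds(2)] t0] li1_Ln[OF nz] by simp
    have P: "\<bar>(b - t) ^ (k - 2) / fact (k - 2)\<bar> \<le> b ^ (k - 2)"
    proof -
      have "0 \<le> b - t" using t by simp
      then have "\<bar>(b - t) ^ (k - 2) / fact (k - 2)\<bar> = (b - t) ^ (k - 2) / fact (k - 2)" by simp
      also have "\<dots> \<le> (b - t) ^ (k - 2) / 1"
        using \<open>0 \<le> b - t\<close> by (intro divide_left_mono) (auto simp: fact_ge_1)
      also have "\<dots> \<le> b ^ (k - 2)" using t \<open>0 \<le> b - t\<close> by (simp add: power_mono)
      finally show ?thesis .
    qed
    have "norm (f n t) = \<bar>(b - t) ^ (k - 2) / fact (k - 2)\<bar> * norm (li 1 (of_real (rr n) * cis t))"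
      using False unfolding f_def f0_def by (simp add: norm_mult norm_power)
    also have "\<dots> \<le> b ^ (k - 2) * (6 + 2 * t powr (-1/2))"
      using P L b0 by (intro mult_mono) auto
    finally show ?thesis unfolding h_def .
  qed
  have conv: "(\<lambda>n. f n t) \<longlonglongrightarrow> g t" if t: "t \<in> {0..b}" for t
  proof (cases "t = 0")
    case True then show ?thesis unfolding f_def g_def by simp
  next
    case False
    then have t0: "0 < t" "t \<le> pi / 3" using t b_def by auto
    have "sin t > 0" using t0 by (intro sin_gt_zero) (auto simp: pi_gt_zero)
    then have nr: "1 - cis t \<notin> \<real>\<^sub>\<le>\<^sub>0" by (simp add: complex_nonpos_Reals_iff)
    have e: "\<And>n. li 1 (of_real (rr n) * cis t) = - Ln (1 - of_real (rr n) * cis t)"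
    proof -
      fix n
      have "\<bar>rr n\<bar> < 1" using rr_bounds[of n] by linarith
      then show "li 1 (of_real (rr n) * cis t) = - Ln (1 - of_real (rr n) * cis t)"
        by (intro li1_Ln) (simp add: norm_mult)
    qed
    have "(\<lambda>n. 1 - of_real (rr n) * cis t) \<longlonglongrightarrow> 1 - of_real 1 * cis t"
      by (intro tendsto_intros rr_lim)
    then have "(\<lambda>n. Ln (1 - of_real (rr n) * cis t)) \<longlonglongrightarrow> Ln (1 - cis t)"
      using nr by (intro tendsto_Ln) auto
    then have "(\<lambda>n. ((b - t) ^ (k - 2) / fact (k - 2)) *\<^sub>R (\<i> ^ (k - 1) * - Ln (1 - of_real (rr n) * cis t)))
       \<longlonglongrightarrow> ((b - t) ^ (k - 2) / fact (k - 2)) *\<^sub>R (\<i> ^ (k - 1) * - Ln (1 - cis t))"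
      by (intro tendsto_scaleR tendsto_mult tendsto_minus tendsto_const)
    then show ?thesis using False unfolding f_def f0_def g_def e by simp
  qed
  have fint: "\<And>n. f n integrable_on {0..b}" using fi by blast
  note dc = dominated_convergence[OF fint hint bound conv]
  show "g integrable_on {0..b}" by (rule dc(1))
  have lim1: "(\<lambda>n. integral {0..b} (f n)) \<longlonglongrightarrow> integral {0..b} g" by (rule dc(2))
  have "integral {0..b} (f n) = V n" for n using fi by blast
  then have lim1': "V \<longlonglongrightarrow> integral {0..b} g" using lim1 by simp
  have nb: "norm (cis b) \<le> 1" by simp
  have lim2: "V \<longlonglongrightarrow> li k (cis b) - (\<Sum>i<k-1. (b ^ i / fact i) *\<^sub>R (\<i> ^ i * li (k - i) 1))"
    unfolding V_def
  proof (intro tendsto_intros li_lim[OF k nb])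
    fix i assume "i \<in> {..<k-1}"
    then have "2 \<le> k - i" by auto
    from li_lim[OF this, of 1] show "(\<lambda>n. li (k - i) (of_real (rr n))) \<longlonglongrightarrow> li (k - i) 1" by simp
  qed
  show "integral {0..b} g = li k (cis b) - (\<Sum>i<k-1. (b ^ i / fact i) *\<^sub>R (\<i> ^ i * li (k - i) 1))"
    using LIMSEQ_unique[OF lim1' lim2] .
qed



lemma Ln_one_minus_cis:
  assumes "0 < t" "t < 2 * pi"
  shows "Ln (1 - cis t) = of_real (A_fun t) + \<i> * of_real ((t - pi) / 2)"
proof -
  have s0: "0 < sin (t / 2)" using assms by (intro sin_gt_zero) auto
  have A: "A_fun t = ln (2 * sin (t / 2))" unfolding A_fun_def using s0 by simp
  define w where "w = of_real (ln (2 * sin (t / 2))) + \<i> * of_real ((t - pi) / 2)"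
  have c1: "cos ((t - pi) / 2) = sin (t / 2)"
    using cos_diff[of "t/2" "pi/2"] by (simp add: diff_divide_distrib)
  have s1: "sin ((t - pi) / 2) = - cos (t / 2)"
    using sin_diff[of "t/2" "pi/2"] by (simp add: diff_divide_distrib)
  have ct: "cos t = 1 - 2 * sin (t/2) ^ 2" using cos_double_sin[of "t/2"] by simp
  have st: "sin t = 2 * sin (t/2) * cos (t/2)" using sin_double[of "t/2"] by simp
  have "exp w = of_real (2 * sin (t / 2)) * cis ((t - pi) / 2)"
  proof -
    have e1: "exp (of_real (ln (2 * sin (t / 2)))) = (of_real (2 * sin (t / 2)) :: complex)"
      using s0 by (simp only: exp_of_real exp_ln_iff) (simp)
    show ?thesis unfolding w_def exp_add e1 cis_conv_exp by simp
  qed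
  also have "\<dots> = 1 - cis t"
    by (rule complex_eqI) (simp_all add: c1 s1 ct st power2_eq_square)
  finally have e: "exp w = 1 - cis t" .
  have "Ln (exp w) = w" using assms unfolding w_def by (intro Ln_exp) auto
  then show ?thesis using e A unfolding w_def by simp
qed

lemma reim_helper:
  "Re (complex_of_real c * (- complex_of_real a + \<i> * complex_of_real p)) = - (c * a)"
  "Im (complex_of_real c * (- complex_of_real a + \<i> * complex_of_real p)) = c * p"
  by simp_all

lemma integral_extract:
  assumes k: "2 \<le> k"
  defines "b \<equiv> pi / 3"
  shows "Re ((- \<i>) ^ (k - 1) * (li k (cis b) - (\<Sum>i<k-1. (b ^ i / fact i) *\<^sub>R (\<i> ^ i * li (k - i) 1))))
           = - integral {0..b} (\<lambda>t. (b - t) ^ (k - 2) * A_fun t) / fact (k - 2)"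
    "Im ((- \<i>) ^ (k - 1) * (li k (cis b) - (\<Sum>i<k-1. (b ^ i / fact i) *\<^sub>R (\<i> ^ i * li (k - i) 1))))
           = integral {0..b} (\<lambda>t. (b - t) ^ (k - 2) * ((pi - t) / 2)) / fact (k - 2)"
proof -
  define g where "g = (\<lambda>t. if t = 0 then 0 else ((b - t) ^ (k - 2) / fact (k - 2)) *\<^sub>R (\<i> ^ (k - 1) * (- Ln (1 - cis t))))"
  note LI = li_integral_formula[OF k, folded b_def g_def]
  define W where "W = li k (cis b) - (\<Sum>i<k-1. (b ^ i / fact i) *\<^sub>R (\<i> ^ i * li (k - i) 1))"
  have gint: "g integrable_on {0..b}" and gW: "integral {0..b} g = W" using LI unfolding W_def g_def by auto
  have unit: "(- \<i>) ^ (k - 1) * \<i> ^ (k - 1) = 1"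
    by (simp add: power_mult_distrib[symmetric])
  have gpt: "(- \<i>) ^ (k - 1) * g t = of_real ((b - t) ^ (k - 2) / fact (k - 2)) *
      (- of_real (A_fun t) + \<i> * of_real ((pi - t) / 2))" if t: "t \<in> {0..b}" "t \<noteq> 0" for t
  proof -
    have "0 < t" "t < 2 * pi" using t unfolding b_def by auto
    note L = Ln_one_minus_cis[OF this]
    have "(- \<i>) ^ (k - 1) * g t = of_real ((b - t) ^ (k - 2) / fact (k - 2)) * (((- \<i>) ^ (k - 1) * \<i> ^ (k - 1)) * (- Ln (1 - cis t)))"
      using t unfolding g_def by (simp add: scaleR_conv_of_real ac_simps)
    also have "\<dots> = of_real ((b - t) ^ (k - 2) / fact (k - 2)) * (- Ln (1 - cis t))"
      unfolding unit by simp
    also have "\<dots> = of_real ((b - t) ^ (k - 2) / fact (k - 2)) * (- of_real (A_fun t) + \<i> * of_real ((pi - t) / 2))"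
      unfolding L by (simp add: field_simps)
    finally show ?thesis .
  qed
  have bl1: "bounded_linear (\<lambda>z. Re ((- \<i>) ^ (k - 1) * z))"
    by (intro bounded_linear_compose[OF bounded_linear_Re] bounded_linear_mult_right)
  have bl2: "bounded_linear (\<lambda>z. Im ((- \<i>) ^ (k - 1) * z))"
    by (intro bounded_linear_compose[OF bounded_linear_Im] bounded_linear_mult_right)
  have "integral {0..b} ((\<lambda>z. Re ((- \<i>) ^ (k - 1) * z)) \<circ> g) = Re ((- \<i>) ^ (k - 1) * W)"
    using integral_linear[OF gint bl1] gW by simp
  moreover have "integral {0..b} ((\<lambda>z. Re ((- \<i>) ^ (k - 1) * z)) \<circ> g)
      = integral {0..b} (\<lambda>t. - ((b - t) ^ (k - 2) * A_fun t) / fact (k - 2))"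
  proof (rule integral_spike[OF negligible_sing[of 0]])
    fix t assume "t \<in> {0..b} - {0}"
    then have "((\<lambda>z. Re ((- \<i>) ^ (k - 1) * z)) \<circ> g) t = Re (of_real ((b - t) ^ (k - 2) / fact (k - 2)) *
      (- of_real (A_fun t) + \<i> * of_real ((pi - t) / 2)))"
      using gpt[of t] by (simp only: o_def Diff_iff singleton_iff not_False_eq_True simp_thms)
    then have e: "((\<lambda>z. Re ((- \<i>) ^ (k - 1) * z)) \<circ> g) t = - (((b - t) ^ (k - 2) / fact (k - 2)) * A_fun t)"
      by (simp only: reim_helper)
    show "- ((b - t) ^ (k - 2) * A_fun t) / fact (k - 2) = ((\<lambda>z. Re ((- \<i>) ^ (k - 1) * z)) \<circ> g) t"
      unfolding e by simp
  qed
  moreover have "integral {0..b} (\<lambda>t. - ((b - t) ^ (k - 2) * A_fun t) / fact (k - 2))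
       = - integral {0..b} (\<lambda>t. (b - t) ^ (k - 2) * A_fun t) / fact (k - 2)"
    by (simp add: integral_neg integral_divide)
  ultimately show "Re ((- \<i>) ^ (k - 1) * W) = - integral {0..b} (\<lambda>t. (b - t) ^ (k - 2) * A_fun t) / fact (k - 2)"
    by simp
  have "integral {0..b} ((\<lambda>z. Im ((- \<i>) ^ (k - 1) * z)) \<circ> g) = Im ((- \<i>) ^ (k - 1) * W)"
    using integral_linear[OF gint bl2] gW by simp
  moreover have "integral {0..b} ((\<lambda>z. Im ((- \<i>) ^ (k - 1) * z)) \<circ> g)
      = integral {0..b} (\<lambda>t. (b - t) ^ (k - 2) * ((pi - t) / 2) / fact (k - 2))"
  proof (rule integral_spike[OF negligible_sing[of 0]])
    fix t assume "t \<in> {0..b} - {0}"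
    then have "((\<lambda>z. Im ((- \<i>) ^ (k - 1) * z)) \<circ> g) t = Im (of_real ((b - t) ^ (k - 2) / fact (k - 2)) *
      (- of_real (A_fun t) + \<i> * of_real ((pi - t) / 2)))"
      using gpt[of t] by (simp only: o_def Diff_iff singleton_iff not_False_eq_True simp_thms)
    then have e: "((\<lambda>z. Im ((- \<i>) ^ (k - 1) * z)) \<circ> g) t = ((b - t) ^ (k - 2) / fact (k - 2)) * ((pi - t) / 2)"
      by (simp only: reim_helper)
    show "(b - t) ^ (k - 2) * ((pi - t) / 2) / fact (k - 2) = ((\<lambda>z. Im ((- \<i>) ^ (k - 1) * z)) \<circ> g) t"
      unfolding e by simp
  qed
  moreover have "integral {0..b} (\<lambda>t. (b - t) ^ (k - 2) * ((pi - t) / 2) / fact (k - 2))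
       = integral {0..b} (\<lambda>t. (b - t) ^ (k - 2) * ((pi - t) / 2)) / fact (k - 2)"
    by (simp add: integral_divide)
  ultimately show "Im ((- \<i>) ^ (k - 1) * W) = integral {0..b} (\<lambda>t. (b - t) ^ (k - 2) * ((pi - t) / 2)) / fact (k - 2)"
    by simp
qed



lemma cos_add_nat_2pi: "cos (x + real q * (2 * pi)) = cos x"
proof (induction q)
  case 0 then show ?case by simp
next
  case (Suc q)
  have "cos (x + real (Suc q) * (2 * pi)) = cos ((x + real q * (2 * pi)) + 2 * pi)"
    by (rule arg_cong[where f=cos]) (simp add: algebra_simps)
  also have "\<dots> = cos (x + real q * (2 * pi))" by (rule cos_periodic)
  finally show ?case using Suc by simp
qed

lemma cos_r_pi3:
  assumes r6: "r < (6::nat)"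
  shows "cos (real r * pi / 3) = 1/2 - (if 2 dvd r then 1 else 0) - 3/2 * (if 3 dvd r then 1 else 0)
      + 3 * (if 6 dvd r then 1 else 0)"
proof -
  have c120: "cos (2 * pi / 3) = - 1/2" using cos_120 by simp
  have c240: "cos (4 * pi / 3) = - 1/2"
  proof -
    have "4 * pi / 3 = pi / 3 + pi" by simp
    then have "cos (4 * pi / 3) = cos (pi / 3 + pi)" by (rule arg_cong)
    also have "\<dots> = - cos (pi / 3)" by (rule cos_periodic_pi)
    finally show ?thesis by (simp add: cos_60)
  qed
  have c300: "cos (5 * pi / 3) = 1/2"
  proof -
    have "5 * pi / 3 = 2 * pi - pi / 3" by simp
    then have "cos (5 * pi / 3) = cos (2 * pi - pi / 3)" by (rule arg_cong)
    also have "\<dots> = cos (pi / 3)" by (rule cos_2pi_minus)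
    finally show ?thesis by (simp add: cos_60)
  qed
  have "r = 0 \<or> r = 1 \<or> r = 2 \<or> r = 3 \<or> r = 4 \<or> r = 5" using r6 by auto
  then show ?thesis
  proof (elim disjE)
    assume "r = 0" then show ?thesis by simp
  next
    assume "r = 1" then show ?thesis by (simp add: cos_60)
  next
    assume r: "r = 2"
    have "real r * pi / 3 = 2 * pi / 3" unfolding r by simp
    then show ?thesis unfolding r using c120 by simp
  next
    assume r: "r = 3"
    have "real r * pi / 3 = pi" unfolding r by simp
    then show ?thesis unfolding r by simp
  next
    assume r: "r = 4"
    have "real r * pi / 3 = 4 * pi / 3" unfolding r by simp
    then show ?thesis unfolding r using c240 by simp
  next
    assume r: "r = 5"
    have "real r * pi / 3 = 5 * pi / 3" unfolding r by simp
    then show ?thesis unfolding r using c300 by simp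
  qed
qed

lemma cos_n_pi3:
  "cos (real n * pi / 3) = 1/2 - (if 2 dvd n then 1 else 0) - 3/2 * (if 3 dvd n then 1 else 0)
      + 3 * (if 6 dvd n then 1 else 0)"
proof -
  define q r where "q = n div 6" and "r = n mod 6"
  have n: "n = 6 * q + r" unfolding q_def r_def by simp
  have r6: "r < 6" unfolding r_def by simp
  have "real n * pi / 3 = real r * pi / 3 + real q * (2 * pi)" unfolding n by (simp add: algebra_simps)
  then have "cos (real n * pi / 3) = cos (real r * pi / 3 + real q * (2 * pi))" by (rule arg_cong)
  also have "\<dots> = cos (real r * pi / 3)" by (rule cos_add_nat_2pi)
  finally have c: "cos (real n * pi / 3) = cos (real r * pi / 3)" .
  have d2: "2 dvd n \<longleftrightarrow> 2 dvd r" unfolding n by presburger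
  have d3: "3 dvd n \<longleftrightarrow> 3 dvd r" unfolding n by presburger
  have d6: "6 dvd n \<longleftrightarrow> 6 dvd r" unfolding n by presburger
  show ?thesis unfolding c d2 d3 d6 by (rule cos_r_pi3[OF r6])
qed

lemma sums_dvd_part:
  fixes d :: nat
  assumes d: "1 \<le> d" and z: "(\<lambda>m. 1 / real (Suc m) ^ k) sums z"
  shows "(\<lambda>m. if d dvd Suc m then 1 / real (Suc m) ^ k else 0) sums (z / real d ^ k)"
proof -
  define f where "f = (\<lambda>m. if d dvd Suc m then 1 / real (Suc m) ^ k else 0)"
  define g where "g = (\<lambda>n. d * n + (d - 1))"
  have sm: "strict_mono g" unfolding g_def strict_mono_def
  proof (intro allI impI)
    fix x y :: nat assume "x < y"
    then have "d * x < d * y" using d by simp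
    then show "d * x + (d - 1) < d * y + (d - 1)" by (rule add_strict_right_mono)
  qed
  have zero: "f m = 0" if "m \<notin> range g" for m
  proof (rule ccontr)
    assume "f m \<noteq> 0"
    then have "d dvd Suc m" unfolding f_def by (auto split: if_splits)
    then obtain j where j: "Suc m = d * j" by blast
    then have "j \<ge> 1" by (cases j) auto
    then have "m = g (j - 1)" using j d unfolding g_def
      by (cases j) (auto simp: algebra_simps)
    then show False using that by auto
  qed
  have fg: "f (g n) = (1 / real d ^ k) * (1 / real (Suc n) ^ k)" for n
  proof -
    have "Suc (g n) = d * Suc n" unfolding g_def using d by (cases d) auto
    then show ?thesis unfolding f_def by (simp add: power_mult_distrib del: of_nat_Suc mult_Suc_right)
  qed
  have "(\<lambda>n. (1 / real d ^ k) * (1 / real (Suc n) ^ k)) sums ((1 / real d ^ k) * z)"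
    by (rule sums_mult[OF z])
  then have "(\<lambda>n. f (g n)) sums (z / real d ^ k)" unfolding fg by simp
  moreover have zr: "\<And>m. m \<notin> range g \<Longrightarrow> f m = 0" using zero by blast
  ultimately have "f sums (z / real d ^ k)" using sums_mono_reindex[of g f, OF sm zr] by blast
  then show ?thesis unfolding f_def .
qed

lemma li_one_real: assumes k: "2 \<le> k" shows "(\<lambda>m. 1 / real (Suc m) ^ k) sums Re (li k 1)" "Im (li k 1) = 0"
proof -
  have "summable (\<lambda>m. (1::complex) ^ Suc m / of_nat (Suc m) ^ k)"
    by (rule li_summable_closed) (use k in auto)
  then have "(\<lambda>m. (1::complex) ^ Suc m / of_nat (Suc m) ^ k) sums li k 1"
    unfolding li_def by (rule summable_sums)
  from sums_Re[OF this] show "(\<lambda>m. 1 / real (Suc m) ^ k) sums Re (li k 1)"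
    by (simp del: of_nat_Suc)
  show "Im (li k 1) = 0"
  proof -
    have "summable (\<lambda>m. (1::complex) ^ Suc m / of_nat (Suc m) ^ k)"
      by (rule li_summable_closed) (use k in auto)
    then have "(\<lambda>m. (1::complex) ^ Suc m / of_nat (Suc m) ^ k) sums li k 1"
      unfolding li_def by (rule summable_sums)
    from sums_Im[OF this] have "(\<lambda>m. 0) sums Im (li k 1)" by (simp del: of_nat_Suc)
    then show ?thesis using sums_zero sums_unique2 by blast
  qed
qed

lemma Re_li_pi3:
  assumes k: "2 \<le> k"
  shows "Re (li k (cis (pi / 3))) = (1/2 - 1 / 2 ^ k - 3/2 * (1 / 3 ^ k) + 3 * (1 / 6 ^ k)) * Re (li k 1)"
proof -
  define z where "z = Re (li k 1)"
  have zs: "(\<lambda>m. 1 / real (Suc m) ^ k) sums z" using li_one_real(1)[OF k] unfolding z_def .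
  have "summable (\<lambda>m. cis (pi/3) ^ Suc m / of_nat (Suc m) ^ k)"
    by (rule li_summable_closed) (use k in auto)
  then have "(\<lambda>m. cis (pi/3) ^ Suc m / of_nat (Suc m) ^ k) sums li k (cis (pi/3))"
    unfolding li_def by (rule summable_sums)
  from sums_Re[OF this[unfolded Complex.DeMoivre]]
  have s0: "(\<lambda>m. Re (cis (real (Suc m) * (pi / 3)) / of_nat (Suc m) ^ k)) sums Re (li k (cis (pi/3)))" .
  have e: "Re (cis (real (Suc m) * (pi / 3)) / of_nat (Suc m) ^ k) = cos (real (Suc m) * pi / 3) / real (Suc m) ^ k" for m
  proof -
    have "(of_nat (Suc m) ^ k :: complex) = of_real (real (Suc m) ^ k)" by simp
    then have "Re (cis (real (Suc m) * (pi / 3)) / of_nat (Suc m) ^ k) = Re (cis (real (Suc m) * (pi / 3))) / real (Suc m) ^ k"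
      by (simp only: Re_divide_of_real)
    also have "\<dots> = cos (real (Suc m) * pi / 3) / real (Suc m) ^ k" by (simp only: cis.sel times_divide_eq_right)
    finally show ?thesis .
  qed
  have s1: "(\<lambda>m. cos (real (Suc m) * pi / 3) / real (Suc m) ^ k) sums Re (li k (cis (pi/3)))"
    using s0 unfolding e .
  have a1: "(\<lambda>m. (1/2) * (1 / real (Suc m) ^ k)) sums ((1/2) * z)" by (rule sums_mult[OF zs])
  have a2: "(\<lambda>m. if 2 dvd Suc m then 1 / real (Suc m) ^ k else 0) sums (z / real 2 ^ k)"
    by (rule sums_dvd_part[OF _ zs]) simp
  have a3: "(\<lambda>m. 3/2 * (if 3 dvd Suc m then 1 / real (Suc m) ^ k else 0)) sums (3/2 * (z / real 3 ^ k))"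
    by (rule sums_mult[OF sums_dvd_part[OF _ zs]]) simp
  have a6: "(\<lambda>m. 3 * (if 6 dvd Suc m then 1 / real (Suc m) ^ k else 0)) sums (3 * (z / real 6 ^ k))"
    by (rule sums_mult[OF sums_dvd_part[OF _ zs]]) simp
  note s2 = sums_add[OF sums_diff[OF sums_diff[OF a1 a2] a3] a6]
  have eqf: "cos (real (Suc m) * pi / 3) / real (Suc m) ^ k = (1/2) * (1 / real (Suc m) ^ k)
     - (if 2 dvd Suc m then 1 / real (Suc m) ^ k else 0)
     - 3/2 * (if 3 dvd Suc m then 1 / real (Suc m) ^ k else 0)
     + 3 * (if 6 dvd Suc m then 1 / real (Suc m) ^ k else 0)" for m
  proof -
    define y where "y = 1 / real (Suc m) ^ k"
    have "cos (real (Suc m) * pi / 3) / real (Suc m) ^ k = (1/2 - (if 2 dvd Suc m then 1 else 0) - 3/2 * (if 3 dvd Suc m then 1 else 0)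
      + 3 * (if 6 dvd Suc m then 1 else 0)) * y"
      unfolding cos_n_pi3[of "Suc m"] y_def by (simp only: divide_inverse mult_1_left)
    also have "\<dots> = (1/2) * y - (if 2 dvd Suc m then y else 0) - 3/2 * (if 3 dvd Suc m then y else 0)
      + 3 * (if 6 dvd Suc m then y else 0)"
      by (simp add: algebra_simps)
    finally show ?thesis unfolding y_def .
  qed
  have "Re (li k (cis (pi/3))) = (1/2) * z - z / real 2 ^ k - 3/2 * (z / real 3 ^ k) + 3 * (z / real 6 ^ k)"
    using s1 s2 unfolding eqf using sums_unique2 by blast
  then show ?thesis unfolding z_def by (simp add: algebra_simps)
qed



lemma sp_zero: "in_rat_span 0 S"
  unfolding in_rat_span_def by (rule exI[of _ "{}"]) simp

lemma sp_elem: "s \<in> S \<Longrightarrow> in_rat_span s S"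
  unfolding in_rat_span_def by (intro exI[of _ "{s}"] exI[of _ "\<lambda>_. 1"]) simp

lemma sp_scale:
  assumes "in_rat_span x S" "c \<in> \<rat>"
  shows "in_rat_span (c * x) S"
proof -
  obtain F q where F: "finite F" "F \<subseteq> S" "x = (\<Sum>s\<in>F. of_rat (q s) * s)"
    using assms(1) unfolding in_rat_span_def by blast
  obtain r where r: "c = of_rat r" using assms(2) by (auto elim: Rats_cases)
  have "c * x = (\<Sum>s\<in>F. of_rat (r * q s) * s)"
    unfolding F(3) r by (simp add: sum_distrib_left of_rat_mult mult.assoc)
  then show ?thesis unfolding in_rat_span_def using F by (intro exI[of _ F] exI[of _ "\<lambda>s. r * q s"]) simp
qed

lemma sp_add:
  assumes "in_rat_span x S" "in_rat_span y S"
  shows "in_rat_span (x + y) S"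
proof -
  obtain F c where F: "finite F" "F \<subseteq> S" "x = (\<Sum>s\<in>F. of_rat (c s) * s)"
    using assms(1) unfolding in_rat_span_def by blast
  obtain G d where G: "finite G" "G \<subseteq> S" "y = (\<Sum>s\<in>G. of_rat (d s) * s)"
    using assms(2) unfolding in_rat_span_def by blast
  define e where "e = (\<lambda>s. (if s \<in> F then c s else 0) + (if s \<in> G then d s else 0))"
  have fin: "finite (F \<union> G)" using F G by simp
  have "(\<Sum>s\<in>F \<union> G. of_rat (e s) * s) = (\<Sum>s\<in>F \<union> G. of_rat (if s \<in> F then c s else 0) * s)
        + (\<Sum>s\<in>F \<union> G. of_rat (if s \<in> G then d s else 0) * s)"
    unfolding e_def by (simp add: of_rat_add distrib_right sum.distrib)
  also have "(\<Sum>s\<in>F \<union> G. of_rat (if s \<in> F then c s else 0) * s) = (\<Sum>s\<in>F. of_rat (c s) * s)"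
    using fin by (intro sum.mono_neutral_cong_right) auto
  also have "(\<Sum>s\<in>F \<union> G. of_rat (if s \<in> G then d s else 0) * s) = (\<Sum>s\<in>G. of_rat (d s) * s)"
    using fin by (intro sum.mono_neutral_cong_right) auto
  finally have "x + y = (\<Sum>s\<in>F \<union> G. of_rat (e s) * s)" using F G by simp
  then show ?thesis unfolding in_rat_span_def using fin F G by (intro exI[of _ "F \<union> G"] exI[of _ e]) simp
qed

lemma sp_neg: "in_rat_span x S \<Longrightarrow> in_rat_span (- x) S"
  using sp_scale[of x S "-1"] by simp

lemma sp_diff: "in_rat_span x S \<Longrightarrow> in_rat_span y S \<Longrightarrow> in_rat_span (x - y) S"
  using sp_add[of x S "- y"] sp_neg[of y S] by simp

lemma sp_sum: "finite I \<Longrightarrow> (\<And>i. i \<in> I \<Longrightarrow> in_rat_span (f i) S) \<Longrightarrow> in_rat_span (sum f I) S"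
  by (induction I rule: finite_induct) (auto intro: sp_zero sp_add)

lemma sp_map:
  assumes "in_rat_span x S" "\<And>s. s \<in> S \<Longrightarrow> in_rat_span (c * s) T"
  shows "in_rat_span (c * x) T"
proof -
  obtain F q where F: "finite F" "F \<subseteq> S" "x = (\<Sum>s\<in>F. of_rat (q s) * s)"
    using assms(1) unfolding in_rat_span_def by blast
  have "c * x = (\<Sum>s\<in>F. of_rat (q s) * (c * s))"
    unfolding F(3) by (simp add: sum_distrib_left ac_simps)
  moreover have "in_rat_span (\<Sum>s\<in>F. of_rat (q s) * (c * s)) T"
  proof (rule sp_sum)
    show "finite F" by (rule F(1))
    fix s assume "s \<in> F"
    then have "in_rat_span (c * s) T" using F(2) assms(2) by blast
    then show "in_rat_span (of_rat (q s) * (c * s)) T" by (rule sp_scale) simp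
  qed
  ultimately show ?thesis by simp
qed

definition Bset :: "bool \<Rightarrow> nat \<Rightarrow> real set" where
  "Bset e j = (if e then {pi ^ j} else S_odd j 1)"

lemma Bset_shift_elem:
  assumes "s \<in> Bset e j"
  shows "pi ^ a * s \<in> Bset e (j + a)"
proof (cases e)
  case True then show ?thesis using assms unfolding Bset_def by (simp add: power_add)
next
  case False
  then obtain m ks where s: "s = pi ^ m * SLs ks" "m + sum_list ks = j" "length ks \<le> 1"
     "odd (length ks)" "\<forall>i\<in>set ks. 2 \<le> i"
    using assms unfolding Bset_def S_odd_def by auto
  have "pi ^ a * s = pi ^ (m + a) * SLs ks" unfolding s(1) by (simp add: power_add)
  moreover have "(m + a) + sum_list ks = j + a" using s(2) by simp
  ultimately show ?thesis using False s unfolding Bset_def S_odd_def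
    by (simp only: if_False mem_Collect_eq) (intro exI[of _ "m + a"] exI[of _ ks]; simp)
qed

lemma sp_shift:
  assumes "in_rat_span x (Bset e j)"
  shows "in_rat_span (pi ^ a * x) (Bset e (j + a))"
  using assms by (rule sp_map) (intro sp_elem Bset_shift_elem)

lemma Rats_fact: "(fact n :: real) \<in> \<rat>"
  by (metis Rats_of_nat of_nat_fact)

lemma S_even_eq: "S_even k 1 = {pi ^ k}" "S_even k 0 = {pi ^ k}"
proof -
  have "S_even k d = {pi ^ k}" if d: "d \<le> 1" for d
  proof
    show "S_even k d \<subseteq> {pi ^ k}"
    proof
      fix x assume "x \<in> S_even k d"
      then obtain m ks where x: "x = pi ^ m * SLs ks" "m + sum_list ks = k" "length ks \<le> d" "even (length ks)"
        unfolding S_even_def by blast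
      have "length ks = 0" using x(3,4) d by presburger
      then have "ks = []" by simp
      then show "x \<in> {pi ^ k}" using x by (simp add: SLs_def)
    qed
    show "{pi ^ k} \<subseteq> S_even k d"
    proof -
      have "pi ^ k = pi ^ k * SLs []" by (simp add: SLs_def)
      then have "pi ^ k \<in> S_even k d" unfolding S_even_def
        by (simp only: mem_Collect_eq) (intro exI[of _ k] exI[of _ "[]"]; simp)
      then show ?thesis by simp
    qed
  qed
  then show "S_even k 1 = {pi ^ k}" "S_even k 0 = {pi ^ k}" by auto
qed



definition good :: "nat \<Rightarrow> complex \<Rightarrow> bool" where
  "good n w \<longleftrightarrow> in_rat_span (Re w) (Bset (even n) n) \<and> in_rat_span (Im w) (Bset (odd n) n)"

lemma good_add: "good n v \<Longrightarrow> good n w \<Longrightarrow> good n (v + w)"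
  unfolding good_def by (auto intro: sp_add)

lemma good_sum: "finite I \<Longrightarrow> (\<And>i. i \<in> I \<Longrightarrow> good n (f i)) \<Longrightarrow> good n (sum f I)"
proof (induction I rule: finite_induct)
  case empty then show ?case unfolding good_def by (simp add: sp_zero)
next
  case (insert x F) then show ?case by (simp add: good_add)
qed

lemma i_pow_even: "\<i> ^ (2 * m) = (- 1) ^ m"
  by (simp add: power_mult)

lemma i_pow_odd: "\<i> ^ (2 * m + 1) = (- 1) ^ m * \<i>"
  by (simp add: power_mult)

lemma Rats_neg1_pow: "((- 1) ^ m :: real) \<in> \<rat>"
  by (induction m) auto

lemma term_good:
  assumes x: "in_rat_span x (Bset (even j) j)"
  shows "good (j + i) (((pi / 3) ^ i / fact i) *\<^sub>R (\<i> ^ i * of_real x))"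
proof -
  define c :: real where "c = 1 / (3 ^ i * fact i)"
  have cQ: "c \<in> \<rat>" unfolding c_def using Rats_fact by (intro Rats_divide Rats_mult) auto
  have xs: "in_rat_span (pi ^ i * x) (Bset (even j) (j + i))" by (rule sp_shift[OF x])
  have cc: "(pi / 3) ^ i / fact i = c * pi ^ i" unfolding c_def by (simp add: power_divide)
  obtain m where "i = 2 * m \<or> i = 2 * m + 1" by (metis oddE evenE)
  then show ?thesis
  proof
    assume i: "i = 2 * m"
    have pw: "\<i> ^ i = (- 1) ^ m" unfolding i by (rule i_pow_even)
    have w: "((pi / 3) ^ i / fact i) *\<^sub>R (\<i> ^ i * of_real x) = of_real ((- 1) ^ m * c * (pi ^ i * x))"
      unfolding cc pw by (simp add: scaleR_conv_of_real)
    have "in_rat_span ((- 1) ^ m * c * (pi ^ i * x)) (Bset (even j) (j + i))"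
      by (rule sp_scale[OF xs]) (rule Rats_mult[OF Rats_neg1_pow cQ])
    moreover have "even (j + i) = even j" using i by simp
    ultimately have "in_rat_span ((- 1) ^ m * c * (pi ^ i * x)) (Bset (even (j + i)) (j + i))" by simp
    then show ?thesis unfolding good_def w by (simp add: sp_zero)
  next
    assume i: "i = 2 * m + 1"
    have pw: "\<i> ^ i = (- 1) ^ m * \<i>" unfolding i by (rule i_pow_odd)
    have w: "((pi / 3) ^ i / fact i) *\<^sub>R (\<i> ^ i * of_real x) = \<i> * of_real ((- 1) ^ m * c * (pi ^ i * x))"
      unfolding cc pw by (simp add: scaleR_conv_of_real)
    have "in_rat_span ((- 1) ^ m * c * (pi ^ i * x)) (Bset (even j) (j + i))"
      by (rule sp_scale[OF xs]) (rule Rats_mult[OF Rats_neg1_pow cQ])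
    moreover have "odd (j + i) = even j" using i by simp
    ultimately have "in_rat_span ((- 1) ^ m * c * (pi ^ i * x)) (Bset (odd (j + i)) (j + i))" by simp
    then show ?thesis unfolding good_def w by (simp add: sp_zero)
  qed
qed

lemma rot_good:
  assumes k: "1 \<le> k" and re: "in_rat_span (Re V) (Bset False k)" and im: "in_rat_span (Im V) (Bset True k)"
  shows "good k (\<i> ^ (k - 1) * V)"
proof -
  obtain m where "k - 1 = 2 * m \<or> k - 1 = 2 * m + 1" by (metis oddE evenE)
  then show ?thesis
  proof
    assume m: "k - 1 = 2 * m"
    then have ok: "odd k" using k by presburger
    have "in_rat_span ((- 1) ^ m * Re V) (Bset (even k) k)" "in_rat_span ((- 1) ^ m * Im V) (Bset (odd k) k)"
      using re im ok by (auto intro!: sp_scale Rats_neg1_pow)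
    moreover have "Re (\<i> ^ (k - 1) * V) = (- 1) ^ m * Re V" "Im (\<i> ^ (k - 1) * V) = (- 1) ^ m * Im V"
    proof -
      have e: "\<i> ^ (k - 1) * V = of_real ((- 1) ^ m) * V" unfolding m i_pow_even by simp
      show "Re (\<i> ^ (k - 1) * V) = (- 1) ^ m * Re V" "Im (\<i> ^ (k - 1) * V) = (- 1) ^ m * Im V"
        unfolding e by simp_all
    qed
    ultimately show ?thesis unfolding good_def by simp
  next
    assume m: "k - 1 = 2 * m + 1"
    then have ek: "even k" using k by presburger
    have "in_rat_span (- ((- 1) ^ m * Im V)) (Bset (even k) k)" "in_rat_span ((- 1) ^ m * Re V) (Bset (odd k) k)"
      using re im ek by (auto intro!: sp_neg sp_scale Rats_neg1_pow)
    moreover have "Re (\<i> ^ (k - 1) * V) = - ((- 1) ^ m * Im V)" "Im (\<i> ^ (k - 1) * V) = (- 1) ^ m * Re V"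
    proof -
      have e: "\<i> ^ (k - 1) * V = of_real ((- 1) ^ m) * (\<i> * V)" unfolding m i_pow_odd by simp
      show "Re (\<i> ^ (k - 1) * V) = - ((- 1) ^ m * Im V)" "Im (\<i> ^ (k - 1) * V) = (- 1) ^ m * Re V"
        unfolding e by simp_all
    qed
    ultimately show ?thesis unfolding good_def by simp
  qed
qed

lemma poly_integral:
  assumes "0 \<le> b"
  shows "((\<lambda>t. (b - t) ^ n) has_integral b ^ Suc n / real (Suc n)) {0..b}"
proof -
  define F where "F = (\<lambda>t::real. - ((b - t) ^ (Suc n)) / real (Suc n))"
  have "((\<lambda>t. (b - t) ^ n) has_integral (F b - F 0)) {0..b}"
  proof (rule fundamental_theorem_of_calculus[OF assms])
    fix x assume "x \<in> {0..b}"
    have "(F has_real_derivative (b - x) ^ n) (at x within {0..b})"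
      unfolding F_def by (auto intro!: derivative_eq_intros simp del: of_nat_Suc power_Suc)
    then show "(F has_vector_derivative (b - x) ^ n) (at x within {0..b})"
      by (simp add: has_real_derivative_iff_has_vector_derivative)
  qed
  then show ?thesis unfolding F_def by simp
qed



lemma W_good:
  assumes k: "2 \<le> k"
  shows "good k (li k (cis (pi / 3)) - (\<Sum>i<k-1. ((pi / 3) ^ i / fact i) *\<^sub>R (\<i> ^ i * li (k - i) 1)))"
proof -
  define b where "b = pi / 3"
  define N where "N = k - 2"
  define W where "W = li k (cis b) - (\<Sum>i<k-1. (b ^ i / fact i) *\<^sub>R (\<i> ^ i * li (k - i) 1))"
  define V where "V = (- \<i>) ^ (k - 1) * W"
  note ex = integral_extract[OF k, folded b_def]
  define IA where "IA = integral {0..b} (\<lambda>t. (b - t) ^ N * A_fun t)"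
  have reV: "Re V = - IA / fact N" using ex(1) unfolding IA_def N_def V_def W_def .
  have imV: "Im V = integral {0..b} (\<lambda>t. (b - t) ^ N * ((pi - t) / 2)) / fact N"
    using ex(2) unfolding N_def V_def W_def .
  have WV: "W = \<i> ^ (k - 1) * V"
  proof -
    have "\<i> ^ (k - 1) * V = (\<i> * (- \<i>)) ^ (k - 1) * W" unfolding V_def power_mult_distrib by (simp only: mult.assoc)
    also have "\<i> * (- \<i>) = 1" by simp
    finally show ?thesis by simp
  qed
  have SL: "SLs [k] = (- 1) ^ N * IA"
  proof -
    have "SLs [k] = integral {0..b} (\<lambda>t. (t - b) ^ N * A_fun t)"
      unfolding SLs_def b_def N_def by simp
    also have "\<dots> = integral {0..b} (\<lambda>t. (- 1) ^ N *\<^sub>R ((b - t) ^ N * A_fun t))"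
    proof (rule integral_cong)
      fix t
      have "(t - b) ^ N = (- 1) ^ N * (b - t) ^ N"
        by (metis minus_diff_eq power_minus)
      then show "(t - b) ^ N * A_fun t = (- 1) ^ N *\<^sub>R ((b - t) ^ N * A_fun t)" by simp
    qed
    also have "\<dots> = (- 1) ^ N * IA" unfolding IA_def integral_cmul by simp
    finally show ?thesis .
  qed
  have SLmem: "SLs [k] \<in> Bset False k"
  proof -
    have "SLs [k] = pi ^ 0 * SLs [k]" by simp
    moreover have "0 + sum_list [k] = k" "length [k] \<le> 1" "odd (length [k])" "\<forall>i\<in>set [k]. 2 \<le> i"
      using k by auto
    ultimately show ?thesis unfolding Bset_def S_odd_def
      by (simp only: if_False mem_Collect_eq) (intro exI[of _ 0] exI[of _ "[k]"]; simp)
  qed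
  have re: "in_rat_span (Re V) (Bset False k)"
  proof -
    have e: "Re V = (- ((- 1) ^ N / fact N)) * SLs [k]"
      unfolding reV SL by (simp add: field_simps)
    have c: "(- ((- 1) ^ N / fact N) :: real) \<in> \<rat>"
      using Rats_neg1_pow Rats_fact by (simp only: Rats_minus_iff) (intro Rats_divide; auto)
    show ?thesis unfolding e by (rule sp_scale[OF sp_elem[OF SLmem] c])
  qed
  have im: "in_rat_span (Im V) (Bset True k)"
  proof -
    have b0: "0 \<le> b" unfolding b_def by simp
    have pb: "pi = 3 * b" unfolding b_def by simp
    have i1: "((\<lambda>t. (b - t) ^ Suc N * (1/2)) has_integral (b ^ Suc (Suc N) / real (Suc (Suc N)) * (1/2))) {0..b}"
      by (rule has_integral_mult_left[OF poly_integral[OF b0]])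
    have i2: "((\<lambda>t. b * (b - t) ^ N) has_integral (b * (b ^ Suc N / real (Suc N)))) {0..b}"
      by (rule has_integral_mult_right[OF poly_integral[OF b0]])
    have hI: "((\<lambda>t. (b - t) ^ Suc N * (1/2) + b * (b - t) ^ N) has_integral
        (b ^ Suc (Suc N) / real (Suc (Suc N)) * (1/2) + b * (b ^ Suc N / real (Suc N)))) {0..b}"
      by (rule has_integral_add[OF i1 i2])
    have hE: "(\<lambda>t. (b - t) ^ Suc N * (1/2) + b * (b - t) ^ N) = (\<lambda>t. (b - t) ^ N * ((pi - t) / 2))"
      unfolding pb by (rule ext) (simp add: algebra_simps)
    have "integral {0..b} (\<lambda>t. (b - t) ^ N * ((pi - t) / 2)) =
        b ^ Suc (Suc N) / real (Suc (Suc N)) * (1/2) + b * (b ^ Suc N / real (Suc N))"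
      using hI unfolding hE by (rule integral_unique)
    also have "\<dots> = (1 / (2 * real (Suc (Suc N))) + 1 / real (Suc N)) / 3 ^ k * pi ^ k"
    proof -
      have kk: "k = Suc (Suc N)" unfolding N_def using k by simp
      have "b ^ Suc (Suc N) = pi ^ k / 3 ^ k" unfolding b_def kk by (simp add: power_divide)
      moreover have "b * b ^ Suc N = b ^ Suc (Suc N)" by simp
      ultimately show ?thesis by (simp add: field_simps del: of_nat_Suc power_Suc)
    qed
    finally have "Im V = ((1 / (2 * real (Suc (Suc N))) + 1 / real (Suc N)) / 3 ^ k / fact N) * pi ^ k"
      unfolding imV by simp
    moreover have "((1 / (2 * real (Suc (Suc N))) + 1 / real (Suc N)) / 3 ^ k / fact N :: real) \<in> \<rat>"
      using Rats_fact by (intro Rats_divide Rats_add Rats_mult Rats_power) auto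
    moreover have "pi ^ k \<in> Bset True k" unfolding Bset_def by simp
    ultimately show ?thesis using sp_scale[OF sp_elem] by metis
  qed
  have "good k (\<i> ^ (k - 1) * V)" by (rule rot_good) (use k re im in auto)
  then show ?thesis using WV unfolding W_def b_def by simp
qed

lemma li_real: "2 \<le> j \<Longrightarrow> li j 1 = of_real (Re (li j 1))"
  using li_one_real(2)[of j] by (simp add: complex_eq_iff)

lemma zeta_good: "2 \<le> k \<Longrightarrow> in_rat_span (Re (li k 1)) (Bset (even k) k)"
proof (induction k rule: less_induct)
  case (less k)
  then have k: "2 \<le> k" by simp
  define L where "L = li k (cis (pi / 3))"
  define T where "T = (\<lambda>i. ((pi / 3) ^ i / fact i) *\<^sub>R (\<i> ^ i * li (k - i) 1))"
  obtain p where p: "k - 1 = Suc p" using k by (cases "k - 1") auto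
  have sumT: "(\<Sum>i<k-1. T i) = li k 1 + (\<Sum>i<p. T (Suc i))"
    unfolding p sum.lessThan_Suc_shift by (simp add: T_def)
  have gW: "good k (L - (\<Sum>i<k-1. T i))" using W_good[OF k] unfolding L_def T_def .
  have gT: "good k (\<Sum>i<p. T (Suc i))"
  proof (rule good_sum)
    fix i assume "i \<in> {..<p}"
    then have i: "i < p" by simp
    define j where "j = k - Suc i"
    have j2: "2 \<le> j" "j < k" using i p unfolding j_def by auto
    have IH: "in_rat_span (Re (li j 1)) (Bset (even j) j)" using less.IH[OF j2(2) j2(1)] .
    have "good (j + Suc i) (((pi / 3) ^ Suc i / fact (Suc i)) *\<^sub>R (\<i> ^ Suc i * of_real (Re (li j 1))))"
      by (rule term_good[OF IH])
    moreover have "j + Suc i = k" using i p unfolding j_def by simp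
    moreover have "T (Suc i) = ((pi / 3) ^ Suc i / fact (Suc i)) *\<^sub>R (\<i> ^ Suc i * of_real (Re (li j 1)))"
      unfolding T_def j_def[symmetric] using li_real[OF j2(1)] by simp
    ultimately show "good k (T (Suc i))" by simp
  qed simp
  have g: "good k (L - li k 1)"
  proof -
    have e: "L - li k 1 = (L - (\<Sum>i<k-1. T i)) + (\<Sum>i<p. T (Suc i))" unfolding sumT by simp
    show ?thesis unfolding e by (rule good_add[OF gW gT])
  qed
  define q :: real where "q = 1/2 - 1 / 2 ^ k - 3/2 * (1 / 3 ^ k) + 3 * (1 / 6 ^ k)"
  have ReL: "Re L = q * Re (li k 1)" unfolding L_def q_def by (rule Re_li_pi3[OF k])
  have qQ: "q \<in> \<rat>" unfolding q_def by (intro Rats_add Rats_diff Rats_mult Rats_divide Rats_power) auto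
  have q1: "q \<noteq> 1"
  proof -
    have "(6::real) ^ 2 \<le> 6 ^ k" using k by (intro power_increasing) auto
    then have "3 * (1 / 6 ^ k) \<le> (3 / 36 :: real)" by (simp add: field_simps)
    moreover have "0 < (1 / 2 ^ k :: real)" "0 < (1 / 3 ^ k :: real)" by auto
    ultimately have "q < 1" unfolding q_def by linarith
    then show ?thesis by simp
  qed
  have "in_rat_span (Re (L - li k 1)) (Bset (even k) k)" using g unfolding good_def by simp
  moreover have "Re (L - li k 1) = (q - 1) * Re (li k 1)" using ReL by (simp add: algebra_simps)
  ultimately have "in_rat_span ((q - 1) * Re (li k 1)) (Bset (even k) k)" by simp
  then have "in_rat_span (1 / (q - 1) * ((q - 1) * Re (li k 1))) (Bset (even k) k)"
    by (rule sp_scale) (use qQ in auto)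
  then show ?case using q1 by simp
qed

lemma L_good:
  assumes k: "2 \<le> k"
  shows "good k (li k (cis (pi / 3)))"
proof -
  define L where "L = li k (cis (pi / 3))"
  define T where "T = (\<lambda>i. ((pi / 3) ^ i / fact i) *\<^sub>R (\<i> ^ i * li (k - i) 1))"
  obtain p where p: "k - 1 = Suc p" using k by (cases "k - 1") auto
  have sumT: "(\<Sum>i<k-1. T i) = li k 1 + (\<Sum>i<p. T (Suc i))"
    unfolding p sum.lessThan_Suc_shift by (simp add: T_def)
  have gW: "good k (L - (\<Sum>i<k-1. T i))" using W_good[OF k] unfolding L_def T_def .
  have gT: "good k (\<Sum>i<p. T (Suc i))"
  proof (rule good_sum)
    fix i assume "i \<in> {..<p}"
    then have i: "i < p" by simp
    define j where "j = k - Suc i"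
    have j2: "2 \<le> j" using i p unfolding j_def by auto
    have IH: "in_rat_span (Re (li j 1)) (Bset (even j) j)" using zeta_good[OF j2] .
    have "good (j + Suc i) (((pi / 3) ^ Suc i / fact (Suc i)) *\<^sub>R (\<i> ^ Suc i * of_real (Re (li j 1))))"
      by (rule term_good[OF IH])
    moreover have "j + Suc i = k" using i p unfolding j_def by simp
    moreover have "T (Suc i) = ((pi / 3) ^ Suc i / fact (Suc i)) *\<^sub>R (\<i> ^ Suc i * of_real (Re (li j 1)))"
      unfolding T_def j_def[symmetric] using li_real[OF j2] by simp
    ultimately show "good k (T (Suc i))" by simp
  qed simp
  have g: "good k (L - li k 1)"
  proof -
    have e: "L - li k 1 = (L - (\<Sum>i<k-1. T i)) + (\<Sum>i<p. T (Suc i))" unfolding sumT by simp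
    show ?thesis unfolding e by (rule good_add[OF gW gT])
  qed
  define q :: real where "q = 1/2 - 1 / 2 ^ k - 3/2 * (1 / 3 ^ k) + 3 * (1 / 6 ^ k)"
  have ReL: "Re L = q * Re (li k 1)" unfolding L_def q_def by (rule Re_li_pi3[OF k])
  have qQ: "q \<in> \<rat>" unfolding q_def by (intro Rats_add Rats_diff Rats_mult Rats_divide Rats_power) auto
  have "in_rat_span (Re L) (Bset (even k) k)"
    unfolding ReL by (rule sp_scale[OF zeta_good[OF k] qQ])
  moreover have "in_rat_span (Im L) (Bset (odd k) k)"
    using g li_one_real(2)[OF k] unfolding good_def by simp
  ultimately show ?thesis unfolding good_def L_def by simp
qed


theorem theorem6:
  fixes k :: nat
  assumes "0 < k"
  shows "in_rat_span (Cl k (pi / 3)) (S_odd k 1)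
       \<and> in_rat_span (Gl k (pi / 3)) (S_even k 1)
       \<and> S_even k 1 = S_even k 0 \<and> S_even k 0 = {pi ^ k}"
proof -
  have main: "in_rat_span (Cl k (pi / 3)) (S_odd k 1) \<and> in_rat_span (Gl k (pi / 3)) {pi ^ k}"
  proof (cases "k = 1")
    case True
    have A0: "A_fun (pi / 3) = 0" unfolding A_fun_def
    proof -
      have "pi / 3 / 2 = pi / 6" by simp
      then show "ln \<bar>2 * sin (pi / 3 / 2)\<bar> = 0" by (simp add: sin_30)
    qed
    have "Ln (1 - cis (pi / 3)) = of_real (A_fun (pi / 3)) + \<i> * of_real ((pi / 3 - pi) / 2)"
      by (rule Ln_one_minus_cis) auto
    then have P: "polylog 1 (cis (pi / 3)) = \<i> * of_real (pi / 3)"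
      unfolding polylog_def A0 by simp
    have Cl1: "Cl 1 (pi / 3) = 0" unfolding Cl_def P by simp
    have Gl1: "Gl 1 (pi / 3) = (1/3) * pi ^ 1" unfolding Gl_def P by simp
    have a: "in_rat_span (Gl 1 (pi / 3)) {pi ^ 1}" unfolding Gl1 by (rule sp_scale[OF sp_elem]) auto
    have b: "in_rat_span (Cl 1 (pi / 3)) (S_odd 1 1)" unfolding Cl1 by (rule sp_zero)
    show ?thesis using a b unfolding True by blast
  next
    case False
    then have k: "2 \<le> k" using assms by simp
    have P: "polylog k z = li k z" for z unfolding polylog_def li_def using False by simp
    have g: "good k (li k (cis (pi / 3)))" by (rule L_good[OF k])
    show ?thesis
    proof (cases "even k")
      case True
      then show ?thesis using g unfolding good_def Cl_def Gl_def P Bset_def by simp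
    next
      case False
      then show ?thesis using g unfolding good_def Cl_def Gl_def P Bset_def by simp
    qed
  qed
  then show ?thesis using S_even_eq by simp
qed

end
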